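(* Let $L/K$ be a nontrivial finite extension inside $\bar K$, and let $N$ be the unique intermediate field $K\subseteq N\subseteq L$ such that $L/N$ is Galois of degree $r_K(L)$. Suppose $L=K(\alpha)$ where $\alpha$ has minimal polynomial $f$ over $K$ with $r_K(f)=r$, and let $\alpha=\alpha_1,\alpha_2,\dots,\alpha_r$ be the roots of $f$ contained in $L$. Then $N=K(t_1,t_2,\dots,t_r)$, where $t_1,\dots,t_r$ are the elementary symmetric polynomials evaluated at $\alpha_1,\dots,\alpha_r$.
   Context: $K$ is a perfect field with a fixed algebraic closure $\bar K$. For an irreducible $f\in K[t]$ and a root $\alpha$, the cluster size $r_K(f)$ is the number of roots of $f$ lying in $K(\alpha)$; for $L=K(\alpha)$, $r_K(L)=r_K(f)$ (independent of the choice of primitive element; equals $|{\rm Aut}(L/K)|$). The existence and uniqueness of the intermediate field $N$ with $L/N$ Galois of degree $r_K(L)$ is known (it is $N=L^{{\rm Aut}(L/K)}$). *)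

theory Defs
  imports "HOL-Algebra.Generated_Fields" "HOL-Algebra.Algebraic_Closure" "HOL-Algebra.Finite_Extensions"
begin

text \<open>All fields live inside an ambient field R (the fixed algebraic closure of K);
  subfields are subsets of carrier R.\<close>

definition perfect_subfield :: "('a, 'b) ring_scheme \<Rightarrow> 'a set \<Rightarrow> bool" where
  "perfect_subfield R K \<longleftrightarrow>
     (\<forall>n::nat. n > 0 \<longrightarrow> add_pow R n \<one>\<^bsub>R\<^esub> \<noteq> \<zero>\<^bsub>R\<^esub>) \<or>
     (\<exists>p::nat. p > 0 \<and> add_pow R p \<one>\<^bsub>R\<^esub> = \<zero>\<^bsub>R\<^esub> \<and>
        (\<forall>n. 0 < n \<and> n < p \<longrightarrow> add_pow R n \<one>\<^bsub>R\<^esub> \<noteq> \<zero>\<^bsub>R\<^esub>) \<and>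
        (\<forall>x\<in>K. \<exists>y\<in>K. y [^]\<^bsub>R\<^esub> p = x))"

definition adjoin :: "('a, 'b) ring_scheme \<Rightarrow> 'a set \<Rightarrow> 'a set \<Rightarrow> 'a set" where
  "adjoin R K S = generate_field R (K \<union> S)"

definition rel_aut :: "('a, 'b) ring_scheme \<Rightarrow> 'a set \<Rightarrow> 'a set \<Rightarrow> ('a \<Rightarrow> 'a) set" where
  "rel_aut R L N = {\<sigma>. \<sigma> \<in> ring_hom (R\<lparr>carrier := L\<rparr>) (R\<lparr>carrier := L\<rparr>) \<and>
       bij_betw \<sigma> L L \<and> \<sigma> \<in> extensional L \<and> (\<forall>x\<in>N. \<sigma> x = x)}"

definition galois_ext :: "('a, 'b) ring_scheme \<Rightarrow> 'a set \<Rightarrow> 'a set \<Rightarrow> bool" where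
  "galois_ext R L N \<longleftrightarrow> subfield N R \<and> subfield L R \<and> N \<subseteq> L \<and>
     ring.finite_dimension R N L \<and>
     {x \<in> L. \<forall>\<sigma>\<in>rel_aut R L N. \<sigma> x = x} = N"

definition roots_in :: "('a, 'b) ring_scheme \<Rightarrow> 'a set \<Rightarrow> 'a \<Rightarrow> 'a set \<Rightarrow> 'a set" where
  "roots_in R K \<alpha> L = {\<beta> \<in> L. ring.eval R (ring.Irr R K \<alpha>) \<beta> = \<zero>\<^bsub>R\<^esub>}"

definition elem_sym :: "('a, 'b) ring_scheme \<Rightarrow> nat \<Rightarrow> 'a set \<Rightarrow> 'a" where
  "elem_sym R k S = finsum R (\<lambda>T. finprod R (\<lambda>x. x) T) {T. T \<subseteq> S \<and> card T = k}"

end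

theory Submission
  imports Defs
begin

lemma (in cring) prod_sub_expand:
  assumes "finite S" "S \<subseteq> carrier R" "x \<in> carrier R"
  shows "(\<Otimes>b\<in>S. x \<ominus> b) =
    (\<Oplus>T\<in>Pow S. ((\<ominus>\<one>) [^] card T \<otimes> (\<Otimes>y\<in>T. y)) \<otimes> x [^] (card S - card T))"
  using assms(1,2)
proof (induction S rule: finite_induct)
  case empty
  then show ?case by simp
next
  case (insert b S)
  have b: "b \<in> carrier R" and S: "S \<subseteq> carrier R" using insert by auto
  define g :: "'a set \<Rightarrow> 'a set \<Rightarrow> 'a" where "g = (\<lambda>S T. ((\<ominus>\<one>) [^] card T \<otimes> (\<Otimes>y\<in>T. y)) \<otimes> x [^] (card S - card (T::'a set)))"
  have fS: "finite T" if "T \<in> Pow S" for T using that insert(1) finite_subset by auto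
  have gc: "g S' T \<in> carrier R" if "T \<subseteq> carrier R" "finite T" for S' T
    unfolding g_def using that assms(3) by (intro m_closed nat_pow_closed finprod_closed a_inv_closed one_closed) auto
  have gS: "g S \<in> Pow S \<rightarrow> carrier R"
  proof
    fix T assume "T \<in> Pow S" thus "g S T \<in> carrier R" using gc[of T S] S fS by auto
  qed
  have G1: "g (insert b S) T = x \<otimes> g S T" if "T \<in> Pow S" for T
  proof -
    have "card T \<le> card S" using that insert(1) by (simp add: card_mono)
    hence "card (insert b S) - card T = Suc (card S - card T)" using insert by simp
    moreover have "(\<ominus>\<one>) [^] card T \<otimes> (\<Otimes>y\<in>T. y) \<in> carrier R"
      using that S by (intro m_closed nat_pow_closed finprod_closed a_inv_closed one_closed) auto
    moreover have "x [^] (card S - card T) \<in> carrier R" using assms(3) by simp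
    moreover have "\<And>c u. c \<in> carrier R \<Longrightarrow> u \<in> carrier R \<Longrightarrow> c \<otimes> (u \<otimes> x) = x \<otimes> (c \<otimes> u)"
      using assms(3) by algebra
    ultimately show ?thesis unfolding g_def
      by (simp only: nat_pow_Suc)
  qed
  have G2: "g (insert b S) (insert b T) = (\<ominus> b) \<otimes> g S T" if "T \<in> Pow S" for T
  proof -
    have fT: "finite T" using fS that .
    have bT: "b \<notin> T" using that insert by auto
    have "card T \<le> card S" using that insert(1) by (simp add: card_mono)
    hence "card (insert b S) - card (insert b T) = card S - card T" using insert fT bT by simp
    moreover have "(\<Otimes>y\<in>insert b T. y) = b \<otimes> (\<Otimes>y\<in>T. y)"
      using fT bT b that S by (subst finprod_insert) auto
    moreover have "card (insert b T) = Suc (card T)" using fT bT by simp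
    moreover have "(\<ominus>\<one>) [^] card T \<in> carrier R" "(\<Otimes>y\<in>T. y) \<in> carrier R"
      using that S by (auto intro!: finprod_closed)
    moreover have "x [^] (card S - card T) \<in> carrier R" using assms(3) by simp
    moreover have "\<And>c P u. c \<in> carrier R \<Longrightarrow> P \<in> carrier R \<Longrightarrow> u \<in> carrier R \<Longrightarrow>
       (c \<otimes> \<ominus>\<one>) \<otimes> (b \<otimes> P) \<otimes> u = \<ominus>b \<otimes> (c \<otimes> P \<otimes> u)"
      using b by algebra
    ultimately show ?thesis unfolding g_def by (simp add: nat_pow_Suc)
  qed
  have fP: "finite (Pow S)" using insert(1) by simp
  have disj: "Pow S \<inter> insert b ` Pow S = {}" using insert(2) by auto
  have gi: "g (insert b S) \<in> Pow (insert b S) \<rightarrow> carrier R"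
  proof
    fix T assume "T \<in> Pow (insert b S)"
    moreover have "finite (insert b S)" using insert(1) by simp
    ultimately have "T \<subseteq> carrier R" "finite T" using insert(4) finite_subset by auto
    thus "g (insert b S) T \<in> carrier R" using gc by blast
  qed
  have inj: "inj_on (insert b) (Pow S)" 
  proof (rule inj_onI)
    fix u v assume "u \<in> Pow S" "v \<in> Pow S" "insert b u = insert b v"
    moreover have "b \<notin> u" "b \<notin> v" using calculation(1,2) insert(2) by auto
    ultimately show "u = v" by (metis Diff_insert_absorb)
  qed
  have GS: "finsum R (g S) (Pow S) \<in> carrier R" using gS by (intro finsum_closed)
  have "finsum R (g (insert b S)) (Pow (insert b S))
      = finsum R (g (insert b S)) (Pow S) \<oplus> finsum R (g (insert b S)) (insert b ` Pow S)"
    unfolding Pow_insert using gi fP disj by (intro finsum_Un_disjoint) (auto simp: Pow_insert)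
  also have "finsum R (g (insert b S)) (insert b ` Pow S) = finsum R (\<lambda>T. g (insert b S) (insert b T)) (Pow S)"
    using gi inj by (intro finsum_reindex) (auto simp: Pow_insert)
  also have "\<dots> = finsum R (\<lambda>T. (\<ominus> b) \<otimes> g S T) (Pow S)"
    using G2 gS b by (intro finsum_cong) (auto simp: Pi_def)
  also have "\<dots> = (\<ominus> b) \<otimes> finsum R (g S) (Pow S)"
    using gS b fP by (intro finsum_rdistr[symmetric]) auto
  also have "finsum R (g (insert b S)) (Pow S) = finsum R (\<lambda>T. x \<otimes> g S T) (Pow S)"
    using G1 gS assms(3) by (intro finsum_cong) (auto simp: Pi_def)
  also have "\<dots> = x \<otimes> finsum R (g S) (Pow S)"
    using gS assms(3) fP by (intro finsum_rdistr[symmetric]) auto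
  also have "x \<otimes> finsum R (g S) (Pow S) \<oplus> (\<ominus> b) \<otimes> finsum R (g S) (Pow S) = (x \<ominus> b) \<otimes> finsum R (g S) (Pow S)"
    using GS b assms(3) by algebra
  also have "finsum R (g S) (Pow S) = (\<Otimes>b\<in>S. x \<ominus> b)"
    using insert(3) S unfolding g_def by simp
  also have "(x \<ominus> b) \<otimes> (\<Otimes>b\<in>S. x \<ominus> b) = (\<Otimes>b\<in>insert b S. x \<ominus> b)"
    using insert(1,2) b S assms(3) by (subst finprod_insert) auto
  finally show ?case unfolding g_def by simp
qed

lemma (in cring) prod_sub_elem_sym:
  assumes "finite S" "S \<subseteq> carrier R" "x \<in> carrier R"
  shows "(\<Otimes>b\<in>S. x \<ominus> b) =
    (\<Oplus>i\<in>{..card S}. ((\<ominus>\<one>) [^] i \<otimes> elem_sym R i S) \<otimes> x [^] (card S - i))"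
proof -
  define t where "t = (\<lambda>T. ((\<ominus>\<one>) [^] card T \<otimes> (\<Otimes>y\<in>T. y)) \<otimes> x [^] (card S - card (T::'a set)))"
  define C where "C = (\<lambda>i. {T. T \<subseteq> S \<and> card T = i})"
  have fC: "finite (C i)" for i unfolding C_def using assms(1) by auto
  have Tc: "T \<subseteq> carrier R" "finite T" if "T \<in> C i" for T i
    using that assms(1,2) finite_subset unfolding C_def by auto
  have pc: "(\<Otimes>y\<in>T. y) \<in> carrier R" if "T \<in> C i" for T i
    using Tc[OF that] by (intro finprod_closed) auto
  have tc: "t T \<in> carrier R" if "T \<in> C i" for T i
    unfolding t_def using pc[OF that] assms(3) by simp
  have Pow_eq: "Pow S = (\<Union>i\<in>{..card S}. C i)"
    unfolding C_def using assms(1) by (auto intro: card_mono)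
  have "(\<Otimes>b\<in>S. x \<ominus> b) = finsum R t (Pow S)"
    unfolding t_def by (rule prod_sub_expand[OF assms])
  also have "\<dots> = (\<Oplus>i\<in>{..card S}. finsum R t (C i))"
    unfolding Pow_eq
  proof (rule add.finprod_UN_disjoint)
    show "pairwise (\<lambda>i j. disjnt (C i) (C j)) {..card S}"
      unfolding pairwise_def disjnt_def C_def by auto
  qed (use fC tc in auto)
  also have "\<dots> = (\<Oplus>i\<in>{..card S}. ((\<ominus>\<one>) [^] i \<otimes> elem_sym R i S) \<otimes> x [^] (card S - i))"
  proof -
    have eq: "finsum R t (C i) = ((\<ominus>\<one>) [^] i \<otimes> elem_sym R i S) \<otimes> x [^] (card S - i)" for i
    proof -
      have "((\<ominus>\<one>) [^] i \<otimes> elem_sym R i S) \<otimes> x [^] (card S - i)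
        = ((\<ominus>\<one>) [^] i \<otimes> finsum R (\<lambda>T. \<Otimes>y\<in>T. y) (C i)) \<otimes> x [^] (card S - i)"
        unfolding elem_sym_def C_def by simp
      also have "\<dots> = finsum R (\<lambda>T. (\<ominus>\<one>) [^] i \<otimes> (\<Otimes>y\<in>T. y)) (C i) \<otimes> x [^] (card S - i)"
        using pc fC by (subst finsum_rdistr) auto
      also have "\<dots> = finsum R (\<lambda>T. ((\<ominus>\<one>) [^] i \<otimes> (\<Otimes>y\<in>T. y)) \<otimes> x [^] (card S - i)) (C i)"
        using pc fC assms(3) by (subst finsum_ldistr) auto
      also have "\<dots> = finsum R t (C i)"
        using pc tc by (intro finsum_cong) (auto simp: t_def C_def Pi_def)
      finally show "finsum R t (C i) = ((\<ominus>\<one>) [^] i \<otimes> elem_sym R i S) \<otimes> x [^] (card S - i)" by simp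
    qed
    have cl: "(\<lambda>i. ((\<ominus>\<one>) [^] i \<otimes> elem_sym R i S) \<otimes> x [^] (card S - i)) \<in> {..card S} \<rightarrow> carrier R"
    proof
      fix i assume "i \<in> {..card S}"
      have "finsum R (\<lambda>T. \<Otimes>y\<in>T. y) (C i) \<in> carrier R"
        using pc by (intro finsum_closed) (auto simp: Pi_def)
      thus "((\<ominus>\<one>) [^] i \<otimes> elem_sym R i S) \<otimes> x [^] (card S - i) \<in> carrier R"
        unfolding elem_sym_def C_def using assms(3) by simp
    qed
    show ?thesis using eq cl by (intro finsum_cong) auto
  qed
  finally show ?thesis .
qed


lemma (in ring) eval_as_finsum:
  assumes "set p \<subseteq> carrier R" "x \<in> carrier R"
  shows "eval p x = (\<Oplus>i\<in>{..<length p}. p ! i \<otimes> x [^] (length p - Suc i))"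
  using assms(1)
proof (induction p)
  case Nil
  then show ?case by simp
next
  case (Cons a p)
  have a: "a \<in> carrier R" and p: "set p \<subseteq> carrier R" using Cons by auto
  have f: "(\<lambda>i. (a # p) ! i \<otimes> x [^] (length (a # p) - Suc i)) \<in> {..<Suc (length p)} \<rightarrow> carrier R"
  proof
    fix i assume i: "i \<in> {..<Suc (length p)}"
    have "(a # p) ! i \<in> carrier R" using i a p by (cases i) (auto simp: subset_iff)
    thus "(a # p) ! i \<otimes> x [^] (length (a # p) - Suc i) \<in> carrier R" using assms(2) by simp
  qed
  have "(\<Oplus>i\<in>{..<length (a#p)}. (a # p) ! i \<otimes> x [^] (length (a # p) - Suc i))
     = (\<Oplus>i\<in>insert 0 (Suc ` {..<length p}). (a # p) ! i \<otimes> x [^] (length (a # p) - Suc i))"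
    by (simp add: lessThan_Suc_eq_insert_0)
  also have "\<dots> = a \<otimes> x [^] length p \<oplus> (\<Oplus>i\<in>Suc ` {..<length p}. (a # p) ! i \<otimes> x [^] (length (a # p) - Suc i))"
    using f a assms(2) by (subst finsum_insert) (auto simp: lessThan_Suc_eq_insert_0)
  also have "(\<Oplus>i\<in>Suc ` {..<length p}. (a # p) ! i \<otimes> x [^] (length (a # p) - Suc i))
      = (\<Oplus>i\<in>{..<length p}. p ! i \<otimes> x [^] (length p - Suc i))"
    using f by (subst finsum_reindex) (auto simp: lessThan_Suc_eq_insert_0)
  finally show ?case using Cons p by simp
qed

lemma (in ring) eval_list_finsum:
  assumes "\<And>i. i \<le> n \<Longrightarrow> c i \<in> carrier R" "x \<in> carrier R"
  shows "eval (map c [0..<Suc n]) x = (\<Oplus>i\<in>{..n}. c i \<otimes> x [^] (n - i))"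
proof -
  have "eval (map c [0..<Suc n]) x = (\<Oplus>i\<in>{..<length (map c [0..<Suc n])}. (map c [0..<Suc n]) ! i \<otimes> x [^] (length (map c [0..<Suc n]) - Suc i))"
    using assms by (intro eval_as_finsum) (auto simp del: upt_Suc)
  also have "\<dots> = (\<Oplus>i\<in>{..n}. c i \<otimes> x [^] (n - i))"
    unfolding length_map length_upt lessThan_Suc_atMost
    using assms by (intro finsum_cong) (auto simp del: upt_Suc simp: Pi_def)
  finally show ?thesis .
qed

context cring begin

context
  fixes L :: "'a set" and \<sigma> :: "'a \<Rightarrow> 'a"
  assumes L: "subring L R"
    and sL': "\<forall>a\<in>L. \<sigma> a \<in> L"
    and sadd': "\<forall>a\<in>L. \<forall>b\<in>L. \<sigma> (a \<oplus> b) = \<sigma> a \<oplus> \<sigma> b"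
    and smult': "\<forall>a\<in>L. \<forall>b\<in>L. \<sigma> (a \<otimes> b) = \<sigma> a \<otimes> \<sigma> b"
    and sone: "\<sigma> \<one> = \<one>" and szero: "\<sigma> \<zero> = \<zero>"
begin

lemma sL: "a \<in> L \<Longrightarrow> \<sigma> a \<in> L" using sL' by blast
lemma sadd: "a \<in> L \<Longrightarrow> b \<in> L \<Longrightarrow> \<sigma> (a \<oplus> b) = \<sigma> a \<oplus> \<sigma> b" using sadd' by blast
lemma smult: "a \<in> L \<Longrightarrow> b \<in> L \<Longrightarrow> \<sigma> (a \<otimes> b) = \<sigma> a \<otimes> \<sigma> b" using smult' by blast

lemma sub_finsum:
  assumes "finite A" "f \<in> A \<rightarrow> L"
  shows "finsum R f A \<in> L \<and> \<sigma> (finsum R f A) = finsum R (\<lambda>a. \<sigma> (f a)) A"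
  using assms
proof (induction A rule: finite_induct)
  case empty
  then show ?case using subringE(2)[OF L] szero by simp
next
  case (insert a A)
  have fL: "f a \<in> L" "f \<in> A \<rightarrow> L" using insert by auto
  have fc: "f a \<in> carrier R" "f \<in> A \<rightarrow> carrier R" using fL subringE(1)[OF L] by auto
  have sc: "\<sigma> (f a) \<in> carrier R" "(\<lambda>a. \<sigma> (f a)) \<in> A \<rightarrow> carrier R" 
    using fL sL subringE(1)[OF L] by auto
  show ?case
    using insert fL fc sc subringE(7)[OF L] sadd by simp
qed

lemma sub_finprod:
  assumes "finite A" "f \<in> A \<rightarrow> L"
  shows "finprod R f A \<in> L \<and> \<sigma> (finprod R f A) = finprod R (\<lambda>a. \<sigma> (f a)) A"
  using assms
proof (induction A rule: finite_induct)
  case empty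
  then show ?case using subringE(3)[OF L] sone by simp
next
  case (insert a A)
  have fL: "f a \<in> L" "f \<in> A \<rightarrow> L" using insert by auto
  have fc: "f a \<in> carrier R" "f \<in> A \<rightarrow> carrier R" using fL subringE(1)[OF L] by auto
  have sc: "\<sigma> (f a) \<in> carrier R" "(\<lambda>a. \<sigma> (f a)) \<in> A \<rightarrow> carrier R" 
    using fL sL subringE(1)[OF L] by auto
  show ?case
    using insert fL fc sc subringE(6)[OF L] smult by simp
qed

lemma sub_pow:
  assumes "a \<in> L"
  shows "a [^] (n::nat) \<in> L \<and> \<sigma> (a [^] n) = \<sigma> a [^] n"
proof (induction n)
  case 0
  then show ?case using subringE(3)[OF L] sone by simp
next
  case (Suc n)
  then show ?case using assms subringE(6)[OF L] smult by simp
qed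

lemma sub_eval:
  assumes "set p \<subseteq> L" "\<And>c. c \<in> set p \<Longrightarrow> \<sigma> c = c" "b \<in> L"
  shows "eval p b \<in> L \<and> \<sigma> (eval p b) = eval p (\<sigma> b)"
  using assms(1,2)
proof (induction p)
  case Nil
  then show ?case using subringE(2)[OF L] szero by simp
next
  case (Cons a p)
  have a: "a \<in> L" "\<sigma> a = a" using Cons by auto
  have pw: "b [^] length p \<in> L" "\<sigma> (b [^] length p) = \<sigma> b [^] length p"
    using sub_pow[OF assms(3)] by auto
  have IH: "eval p b \<in> L" "\<sigma> (eval p b) = eval p (\<sigma> b)" using Cons by auto
  have m: "a \<otimes> b [^] length p \<in> L" using a pw subringE(6)[OF L] by auto
  show ?case using IH m a pw subringE(7)[OF L] sadd smult by simp
qed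

end
end


lemma (in field) main_aux:
  fixes K L N :: "'a set" and \<alpha> :: 'a
  assumes sK: "subfield K R"
    and "\<alpha> \<in> carrier R"
    and "algebraic K \<alpha>"
    and "L = adjoin R K {\<alpha>}"
    and "subfield N R" and "K \<subseteq> N" and "N \<subseteq> L"
    and "galois_ext R L N"
    and "dim N L = card (roots_in R K \<alpha> L)"
  shows "N = adjoin R K ((\<lambda>k. elem_sym R k (roots_in R K \<alpha> L)) ` {1..card (roots_in R K \<alpha> L)})"
proof -
  have alg: "(algebraic over K) \<alpha>" using assms(3) unfolding over_def .
  define S where "S = roots_in R K \<alpha> L"
  define r where "r = card S"
  define e where "e = (\<lambda>k. elem_sym R k S)"
  define F where "F = adjoin R K (e ` {1..r})"
  have Kc: "K \<subseteq> carrier R" using subfieldE(3)[OF sK] .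
  have Lgen: "L = generate_field R (K \<union> {\<alpha>})" using assms(4) unfolding adjoin_def .
  have sL: "subfield L R" unfolding Lgen using Kc assms(2) by (intro generate_field_is_subfield) auto
  have Lsr: "subring L R" using subfieldE(1)[OF sL] .
  have KL: "K \<subseteq> L" unfolding Lgen by (auto intro: generate_field.incl)
  have aL: "\<alpha> \<in> L" unfolding Lgen by (auto intro: generate_field.incl)
  have Lc: "L \<subseteq> carrier R" using subfieldE(3)[OF sL] .
  have Irr: "Irr K \<alpha> \<in> carrier (K[X])" "eval (Irr K \<alpha>) \<alpha> = \<zero>"
    using IrrE[OF sK assms(2) alg] by auto
  have IrrK: "set (Irr K \<alpha>) \<subseteq> K"
    using Irr(1) unfolding univ_poly_carrier[symmetric] polynomial_def by auto
  have SL: "S \<subseteq> L" unfolding S_def roots_in_def by auto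
  have Sc: "S \<subseteq> carrier R" using SL Lc by auto
  have aS: "\<alpha> \<in> S" unfolding S_def roots_in_def using aL Irr(2) by auto
  have gal: "finite_dimension N L" "{x \<in> L. \<forall>\<sigma>\<in>rel_aut R L N. \<sigma> x = x} = N"
    using assms(8) unfolding galois_ext_def by auto
  have dimNL: "dimension r N L"
    using finite_dimensionE[OF assms(5) gal(1)] assms(9) unfolding r_def S_def over_def by simp
  have r0: "r \<noteq> 0"
  proof
    assume "r = 0" then have "L = {\<zero>}" using dimension_zero[OF assms(5)] dimNL by simp
    then show False using subringE(3)[OF Lsr] one_not_zero by auto
  qed
  have finS: "finite S"
  proof (rule ccontr)
    assume "infinite S" then have "r = 0" unfolding r_def by simp
    then show False using r0 by simp
  qed
  have prodL: "finprod R (\<lambda>x. x) T \<in> L" if "T \<subseteq> S" for T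
  proof -
    have "finite T" using that finS finite_subset by blast
    moreover have "(\<lambda>x. x) \<in> T \<rightarrow> L" using that SL by blast
    ultimately show ?thesis using sub_finprod[OF Lsr, of "\<lambda>x. x" T "\<lambda>x. x"] by simp
  qed
  have eL: "e k \<in> L" for k
  proof -
    have "finite {T. T \<subseteq> S \<and> card T = k}" using finS by simp
    moreover have "(\<lambda>T. finprod R (\<lambda>x. x) T) \<in> {T. T \<subseteq> S \<and> card T = k} \<rightarrow> L" using prodL by blast
    ultimately show ?thesis unfolding e_def elem_sym_def using sub_finsum[OF Lsr, of "\<lambda>x. x"] by simp
  qed
  have eN: "e k \<in> N" for k
  proof -
    have "\<forall>\<sigma>\<in>rel_aut R L N. \<sigma> (e k) = e k"
    proof
      fix \<sigma> assume \<sigma>: "\<sigma> \<in> rel_aut R L N"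
      then have hom: "\<sigma> \<in> ring_hom (R\<lparr>carrier := L\<rparr>) (R\<lparr>carrier := L\<rparr>)"
        and bij: "bij_betw \<sigma> L L" and fixN: "\<forall>x\<in>N. \<sigma> x = x"
        unfolding rel_aut_def by auto
      have rL: "ring (R\<lparr>carrier := L\<rparr>)" using subring_is_ring[OF Lsr] .
      have sadd: "\<forall>a\<in>L. \<forall>b\<in>L. \<sigma> (a \<oplus> b) = \<sigma> a \<oplus> \<sigma> b"
        using ring_hom_add[OF hom] by simp
      have smult: "\<forall>a\<in>L. \<forall>b\<in>L. \<sigma> (a \<otimes> b) = \<sigma> a \<otimes> \<sigma> b"
        using ring_hom_mult[OF hom] by simp
      have sone: "\<sigma> \<one> = \<one>" using ring_hom_one[OF hom] by simp
      have szero: "\<sigma> \<zero> = \<zero>" using ring_hom_zero[OF hom rL rL] by simp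
      have sLL: "\<forall>a\<in>L. \<sigma> a \<in> L" using bij_betw_apply[OF bij] by blast
      have inj: "inj_on \<sigma> L" using bij_betw_imp_inj_on[OF bij] .
      note SUB = sub_finsum[of L \<sigma>, OF Lsr sLL sadd smult sone szero] sub_finprod[of L \<sigma>, OF Lsr sLL sadd smult sone szero]
                 sub_eval[of L \<sigma>, OF Lsr sLL sadd smult sone szero]
      have fixK: "\<And>c. c \<in> set (Irr K \<alpha>) \<Longrightarrow> \<sigma> c = c" using fixN assms(6) IrrK by auto
      have sS: "\<sigma> ` S \<subseteq> S"
      proof
        fix y assume "y \<in> \<sigma> ` S"
        then obtain b where b: "b \<in> S" "y = \<sigma> b" by auto
        have bL: "b \<in> L" and ev: "eval (Irr K \<alpha>) b = \<zero>" using b SL unfolding S_def roots_in_def by auto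
        have "eval (Irr K \<alpha>) (\<sigma> b) = \<sigma> (eval (Irr K \<alpha>) b)"
          using SUB(3)[OF _ fixK bL] IrrK KL by auto
        then show "y \<in> S" using ev szero b sLL bL unfolding S_def roots_in_def by auto
      qed
      have injS: "inj_on \<sigma> S" using inj SL inj_on_subset by blast
      have sSeq: "\<sigma> ` S = S" using sS finS card_image[OF injS] by (intro card_subset_eq) auto
      define C where "C = {T. T \<subseteq> S \<and> card T = k}"
      have finC: "finite C" unfolding C_def using finS by auto
      have injC: "inj_on ((`) \<sigma>) C" using injS unfolding C_def by (intro inj_on_image) (auto intro: inj_on_subset)
      have CC: "((`) \<sigma>) ` C = C"
      proof (rule card_subset_eq[OF finC])
        show "(`) \<sigma> ` C \<subseteq> C"
        proof
          fix T' assume "T' \<in> (`) \<sigma> ` C"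
          then obtain T where T: "T \<in> C" "T' = \<sigma> ` T" by auto
          have "inj_on \<sigma> T" using T injS unfolding C_def by (auto intro: inj_on_subset)
          then show "T' \<in> C" using T sSeq unfolding C_def by (auto simp: card_image)
        qed
        show "card ((`) \<sigma> ` C) = card C" using card_image[OF injC] .
      qed
      have "\<sigma> (e k) = finsum R (\<lambda>T. \<sigma> (finprod R (\<lambda>x. x) T)) C"
        unfolding e_def elem_sym_def C_def[symmetric] using SUB(1)[OF finC] prodL unfolding C_def by (auto simp: Pi_def)
      also have "\<dots> = finsum R (\<lambda>T. finprod R (\<lambda>x. x) (\<sigma> ` T)) C"
      proof -
        have cl: "(\<lambda>T. finprod R (\<lambda>x. x) (\<sigma> ` T)) \<in> C \<rightarrow> carrier R"
          using Sc sS by (auto intro!: finprod_closed simp: C_def)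
        have eq: "\<sigma> (finprod R (\<lambda>x. x) T) = finprod R (\<lambda>x. x) (\<sigma> ` T)" if "T \<in> C" for T
        proof -
          have T: "T \<subseteq> S" "finite T" using that finS finite_subset unfolding C_def by auto
          have "\<sigma> (finprod R (\<lambda>x. x) T) = finprod R \<sigma> T"
          proof -
            have "(\<lambda>x. x) \<in> T \<rightarrow> L" using T SL by auto
            then show ?thesis using SUB(2)[OF T(2), where f="\<lambda>x. x"] by (simp add: eta_contract_eq)
          qed
          also have "\<dots> = finprod R (\<lambda>x. x) (\<sigma> ` T)"
            using T sS Sc injS by (subst finprod_reindex) (auto intro: inj_on_subset)
          finally show ?thesis .
        qed
        show ?thesis using cl eq by (intro finsum_cong) auto
      qed
      also have "\<dots> = finsum R (\<lambda>T. finprod R (\<lambda>x. x) T) (((`) \<sigma>) ` C)"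
        using injC Sc CC by (subst finsum_reindex) (auto intro!: finprod_closed simp: C_def)
      also have "\<dots> = e k" unfolding CC unfolding e_def elem_sym_def C_def ..
      finally show "\<sigma> (e k) = e k" .
    qed
    then show ?thesis using gal(2) eL by auto
  qed
  have Fgen: "F = generate_field R (K \<union> e ` {1..r})" unfolding F_def adjoin_def ..
  have Hc: "K \<union> e ` {1..r} \<subseteq> carrier R" using Kc eL Lc by auto
  have sF: "subfield F R" unfolding Fgen using Hc by (rule generate_field_is_subfield)
  have Fsr: "subring F R" using subfieldE(1)[OF sF] .
  have FN: "F \<subseteq> N" unfolding Fgen
    using Hc assms(5,6) eN by (intro generate_field_min_subfield1) auto
  have KF: "K \<subseteq> F" unfolding Fgen by (auto intro: generate_field.incl)
  have FL: "F \<subseteq> L" using FN assms(7) by auto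
  have e0: "e 0 = \<one>"
  proof -
    have "{T. T \<subseteq> S \<and> card T = 0} = {{}}" using finS by (auto dest: finite_subset simp: card_eq_0_iff)
    then show ?thesis unfolding e_def elem_sym_def by simp
  qed
  have eF: "e i \<in> F" if "i \<le> r" for i
  proof (cases "i = 0")
    case True then show ?thesis using e0 subringE(3)[OF Fsr] by simp
  next
    case False then have "e i \<in> e ` {1..r}" using that by auto
    then show ?thesis unfolding Fgen by (auto intro: generate_field.incl)
  qed
  define c where "c = (\<lambda>i. (\<ominus>\<one>) [^] i \<otimes> e i)"
  have m1F: "(\<ominus>\<one>) [^] (i::nat) \<in> F" for i
  proof (induction i)
    case 0 then show ?case using subringE(3)[OF Fsr] by simp
  next
    case (Suc i) then show ?case using subringE(3,5,6)[OF Fsr] by simp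
  qed
  have cF: "c i \<in> F" if "i \<le> r" for i
    unfolding c_def using eF[OF that] m1F subringE(6)[OF Fsr] by blast
  have Fc: "F \<subseteq> carrier R" using subfieldE(3)[OF sF] .
  define p where "p = map c [0..<Suc r]"
  have p_ne: "p \<noteq> []" unfolding p_def by simp
  have p_deg: "degree p = r" unfolding p_def by simp
  have p_hd: "lead_coeff p = \<one>" unfolding p_def c_def using e0 by (simp del: upt_Suc add: upt_conv_Cons)
  have p_set: "set p \<subseteq> F" unfolding p_def using cF by auto
  have pF: "p \<in> carrier (F[X])"
    unfolding univ_poly_carrier[symmetric] polynomial_def using p_set p_hd by simp
  have ev: "eval p \<alpha> = \<zero>"
  proof -
    have "eval p \<alpha> = (\<Oplus>i\<in>{..r}. c i \<otimes> \<alpha> [^] (r - i))"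
      unfolding p_def using cF Fc assms(2) by (intro eval_list_finsum) auto
    also have "\<dots> = (\<Otimes>b\<in>S. \<alpha> \<ominus> b)"
      unfolding c_def e_def r_def using prod_sub_elem_sym[OF finS Sc assms(2)] by simp
    also have "\<dots> = \<zero>"
    proof -
      have Seq: "S = insert \<alpha> (S - {\<alpha>})" using aS by auto
      have cl: "(\<lambda>b. \<alpha> \<ominus> b) \<in> S - {\<alpha>} \<rightarrow> carrier R" using Sc assms(2) by auto
      have "(\<Otimes>b\<in>insert \<alpha> (S - {\<alpha>}). \<alpha> \<ominus> b) = (\<alpha> \<ominus> \<alpha>) \<otimes> (\<Otimes>b\<in>S - {\<alpha>}. \<alpha> \<ominus> b)"
        using finS cl assms(2) by (intro finprod_insert) auto
      then have "(\<Otimes>b\<in>S. \<alpha> \<ominus> b) = (\<alpha> \<ominus> \<alpha>) \<otimes> (\<Otimes>b\<in>S - {\<alpha>}. \<alpha> \<ominus> b)"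
        using Seq by simp
      also have "\<dots> = \<zero>"
      proof -
        have "(\<Otimes>b\<in>S - {\<alpha>}. \<alpha> \<ominus> b) \<in> carrier R" using cl by (rule finprod_closed)
        moreover have "\<alpha> \<ominus> \<alpha> = \<zero>" using assms(2) by (simp add: a_minus_def r_neg)
        ultimately show ?thesis by simp
      qed
      finally show ?thesis .
    qed
    finally show ?thesis .
  qed
  have algF: "(algebraic over F) \<alpha>" using algebraic_mono[OF KF alg] .
  have dvd: "Irr F \<alpha> pdivides p" using Irr_minimal[OF sF assms(2) algF pF ev] .
  have degIrr: "degree (Irr F \<alpha>) \<le> r"
    using pdivides_imp_degree_le[OF Fsr IrrE(1)[OF sF assms(2) algF] pF p_ne] dvd p_deg by simp
  have sE: "subfield (simple_extension F \<alpha>) R"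
    using simple_extension_is_subfield[OF sF assms(2)] algF by simp
  have EL: "simple_extension F \<alpha> = L"
  proof
    show "simple_extension F \<alpha> \<subseteq> L" using simple_extension_subring_incl[OF Lsr FL aL] .
    have "K \<subseteq> simple_extension F \<alpha>" using KF simple_extension_incl[OF Fc assms(2)] by auto
    moreover have "\<alpha> \<in> simple_extension F \<alpha>" using simple_extension_mem[OF Fsr assms(2)] .
    ultimately show "L \<subseteq> simple_extension F \<alpha>" unfolding Lgen
      using Kc assms(2) sE by (intro generate_field_min_subfield1) auto
  qed
  have finFL: "finite_dimension F L"
    using finite_dimension_simple_extension[OF sF assms(2)] algF EL by simp
  have dimFL: "dim F L \<le> r"
    using simple_extension_dim[OF sF assms(2) algF] EL degIrr unfolding over_def by simp
  have subalg: "subalgebra F N R"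
    unfolding subalgebra_def subalgebra_axioms_def
    using subring.axioms(1)[OF subfieldE(1)[OF assms(5)]] FN subringE(6)[OF subfieldE(1)[OF assms(5)]] by auto
  have finFN: "finite_dimension F N"
    using subalbegra_incl_imp_finite_dimension[OF sF finFL subalg assms(7)] .
  have tower: "dim F L = dim F N * dim N L"
    using telescopic_base_dim(2)[OF sF assms(5) finFN gal(1)] unfolding over_def .
  have dNL: "dim N L = r" using assms(9) unfolding r_def S_def .
  have dFN: "dimension (dim F N) F N" using finite_dimensionE[OF sF finFN] unfolding over_def .
  have dFN0: "dim F N \<noteq> 0"
  proof
    assume "dim F N = 0" then have "N = {\<zero>}" using dimension_zero[OF sF] dFN by simp
    then show False using subringE(3)[OF subfieldE(1)[OF assms(5)]] one_not_zero by auto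
  qed
  have "dim F N * r \<le> 1 * r" using tower dNL dimFL by simp
  then have "dim F N \<le> 1" using r0 by simp
  then have d1: "dimension 1 F N" using dFN dFN0 by (metis le_neq_implies_less less_one)
  have ind: "independent F [\<one>]"
    by (rule li_Cons) auto
  have "Span F [\<one>] = N"
    using independent_length_eq_dimension[OF sF d1 ind] subringE(3)[OF subfieldE(1)[OF assms(5)]] by simp
  moreover have "Span F [\<one>] = F"
    using independent_length_eq_dimension[OF sF dimension_one[OF sF] ind] subringE(3)[OF Fsr] by simp
  ultimately have "N = F" by simp
  then show ?thesis unfolding F_def e_def r_def S_def .
qed

theorem proposition7p4:
  fixes R :: "('a, 'b) ring_scheme" and K L N :: "'a set" and \<alpha> :: 'a
  assumes "algebraic_closure R K"
    and "perfect_subfield R K"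
    and "\<alpha> \<in> carrier R"
    and "ring.algebraic R K \<alpha>"
    and "L = adjoin R K {\<alpha>}"
    and "L \<noteq> K"
    and "subfield N R" and "K \<subseteq> N" and "N \<subseteq> L"
    and "galois_ext R L N"
    and "ring.dim R N L = card (roots_in R K \<alpha> L)"
  shows "N = adjoin R K ((\<lambda>k. elem_sym R k (roots_in R K \<alpha> L)) ` {1..card (roots_in R K \<alpha> L)})"
proof -
  have fR: "field R" using assms(1) unfolding algebraic_closure_def by auto
  have sK: "subfield K R" using assms(1) unfolding algebraic_closure_def by auto
  show ?thesis using field.main_aux[OF fR sK assms(3,4,5,7,8,9,10,11)] .
qed

end
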